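(* Let $A$ be a basic connected finite dimensional algebra over an algebraically closed field $k$ with ordinary quiver $Q$ without oriented cycles, and let $\nu\colon kQ\twoheadrightarrow A$ be a presentation with kernel $I$. Regard $\mathsf{Hom}(\pi_1(Q,I),k^+)$ as an abelian Lie algebra (zero bracket). Then $\theta_\nu\colon\mathsf{Hom}(\pi_1(Q,I),k^+)\to\mathsf{HH}^1(A)$ is a Lie algebra homomorphism; in particular $\mathsf{Im}(\theta_\nu)$ is an abelian Lie subalgebra of $\mathsf{HH}^1(A)$.
   Context: Fix a complete set $e_1,\dots,e_n$ of primitive orthogonal idempotents of $A$ (indexed by $Q_0=\{1,\dots,n\}$), $E=\bigoplus ke_i$. A presentation is a surjective algebra homomorphism $\nu\colon kQ\twoheadrightarrow A$ with admissible kernel (i.e. $(kQ^+)^N\subseteq\mathsf{Ker}\,\nu\subseteq(kQ^+)^2$ for some $N\ge2$, $kQ^+$ the arrow ideal) and $\nu(e_i)=e_i$. Walks are paths in $Q$ with formal inverses of arrows allowed. The homotopy relation $\sim_I$ is the smallest equivalence relation on walks with $\alpha\alpha^{-1}\sim_I e_y$, $\alpha^{-1}\alpha\sim_I e_x$ for arrows $\alpha\colon x\to y$, compatible with concatenation ($v\sim_I v'\Rightarrow wvu\sim_I wv'u$), and with $u\sim_I v$ for paths $u,v$ occurring with nonzero coefficient in a same minimal relation of $I$ (a nonzero $\sum t_iu_i\in I$, $t_i\ne0$, distinct paths, no nonempty proper subsum in $I$). With a fixed base vertex $x_0$, $\pi_1(Q,I)$ is the group of classes of closed walks at $x_0$.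 $\mathsf{HH}^1(A)$ is identified with $Der_0(A)/Int_0(A)$, where $Der_0(A)$ consists of derivations vanishing on all $e_i$ (Lie bracket: commutator) and $Int_0(A)=\{a\mapsto ea-ae\mid e\in E\}$. Fix a maximal tree $T$ of $Q$ and let $\gamma_x$ be the minimal walk in $T$ from $x_0$ to $x$. For $f\colon\pi_1(Q,I)\to k^+$ a group homomorphism, $\theta_\nu(f)$ is the class of the derivation $\tilde f$ with $\tilde f(\nu(u))=f([\gamma_y^{-1}u\gamma_x]_I)\nu(u)$ for all paths $u$ from $x$ to $y$. *)

theory Defs
  imports "HOL-Algebra.Group" "HOL-Computational_Algebra.Polynomial"
begin

definition alg_closed :: "'k::field itself \<Rightarrow> bool" where
  "alg_closed _ \<longleftrightarrow> (\<forall>p::'k poly. degree p \<noteq> 0 \<longrightarrow> (\<exists>x. poly p x = 0))"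

definition kalgebra :: "('k::field \<Rightarrow> 'a::ring_1 \<Rightarrow> 'a) \<Rightarrow> bool" where
  "kalgebra sc \<longleftrightarrow>
     (\<forall>c a b. sc c (a + b) = sc c a + sc c b) \<and>
     (\<forall>c d a. sc (c + d) a = sc c a + sc d a) \<and>
     (\<forall>c d a. sc (c * d) a = sc c (sc d a)) \<and>
     (\<forall>a. sc 1 a = a) \<and>
     (\<forall>c a b. sc c (a * b) = sc c a * b) \<and>
     (\<forall>c a b. sc c (a * b) = a * sc c b)"

record ('v, 'e) quiver =
  verts :: "'v set"
  arrs  :: "'e set"
  src   :: "'e \<Rightarrow> 'v"
  tgt   :: "'e \<Rightarrow> 'v"

text \<open>A walk is a start vertex together with the list of steps traversed in order;
  a step (a, True) traverses the arrow a, a step (a, False) traverses its formal inverse.\<close>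
type_synonym ('v, 'e) walk = "'v \<times> ('e \<times> bool) list"

fun step_src :: "('v, 'e, 'm) quiver_scheme \<Rightarrow> 'e \<times> bool \<Rightarrow> 'v" where
  "step_src Q (a, b) = (if b then src Q a else tgt Q a)"

fun step_tgt :: "('v, 'e, 'm) quiver_scheme \<Rightarrow> 'e \<times> bool \<Rightarrow> 'v" where
  "step_tgt Q (a, b) = (if b then tgt Q a else src Q a)"

fun walk_end :: "('v, 'e, 'm) quiver_scheme \<Rightarrow> 'v \<Rightarrow> ('e \<times> bool) list \<Rightarrow> 'v" where
  "walk_end Q x [] = x"
| "walk_end Q x (s # ws) = walk_end Q (step_tgt Q s) ws"

fun walk_ok :: "('v, 'e, 'm) quiver_scheme \<Rightarrow> 'v \<Rightarrow> ('e \<times> bool) list \<Rightarrow> bool" where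
  "walk_ok Q x [] = True"
| "walk_ok Q x (s # ws) = (step_src Q s = x \<and> walk_ok Q (step_tgt Q s) ws)"

definition wstart :: "('v, 'e) walk \<Rightarrow> 'v" where
  "wstart w = fst w"

definition wend :: "('v, 'e, 'm) quiver_scheme \<Rightarrow> ('v, 'e) walk \<Rightarrow> 'v" where
  "wend Q w = walk_end Q (fst w) (snd w)"

definition is_walk :: "('v, 'e, 'm) quiver_scheme \<Rightarrow> ('v, 'e) walk \<Rightarrow> bool" where
  "is_walk Q w \<longleftrightarrow> fst w \<in> verts Q \<and> (\<forall>s \<in> set (snd w). fst s \<in> arrs Q) \<and> walk_ok Q (fst w) (snd w)"

text \<open>Paths: walks using no inverse arrows. The trivial path at x is (x, []).\<close>
definition is_path :: "('v, 'e, 'm) quiver_scheme \<Rightarrow> ('v, 'e) walk \<Rightarrow> bool" where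
  "is_path Q w \<longleftrightarrow> is_walk Q w \<and> (\<forall>s \<in> set (snd w). snd s)"

definition path_len :: "('v, 'e) walk \<Rightarrow> nat" where
  "path_len w = length (snd w)"

text \<open>Concatenation, written right to left as in the paper: wcomp v u = v u is "first u, then v".\<close>
definition wcomp :: "('v, 'e) walk \<Rightarrow> ('v, 'e) walk \<Rightarrow> ('v, 'e) walk" where
  "wcomp v u = (fst u, snd u @ snd v)"

definition winv :: "('v, 'e, 'm) quiver_scheme \<Rightarrow> ('v, 'e) walk \<Rightarrow> ('v, 'e) walk" where
  "winv Q w = (wend Q w, rev (map (\<lambda>(a, b). (a, \<not> b)) (snd w)))"

definition connected_quiver :: "('v, 'e, 'm) quiver_scheme \<Rightarrow> bool" where
  "connected_quiver Q \<longleftrightarrow>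
     (\<forall>x \<in> verts Q. \<forall>y \<in> verts Q. \<exists>w. is_walk Q w \<and> wstart w = x \<and> wend Q w = y)"

definition no_oriented_cycles :: "('v, 'e, 'm) quiver_scheme \<Rightarrow> bool" where
  "no_oriented_cycles Q \<longleftrightarrow> (\<forall>p. is_path Q p \<and> snd p \<noteq> [] \<longrightarrow> wend Q p \<noteq> wstart p)"

definition finite_quiver :: "('v, 'e, 'm) quiver_scheme \<Rightarrow> bool" where
  "finite_quiver Q \<longleftrightarrow> finite (verts Q) \<and> finite (arrs Q)
     \<and> (\<forall>a \<in> arrs Q. src Q a \<in> verts Q \<and> tgt Q a \<in> verts Q)"

definition reduced :: "('e \<times> bool) list \<Rightarrow> bool" where
  "reduced ws \<longleftrightarrow> (\<forall>i. Suc i < length ws \<longrightarrow>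
      \<not> (fst (ws ! i) = fst (ws ! Suc i) \<and> snd (ws ! i) \<noteq> snd (ws ! Suc i)))"

definition tree_walk :: "('v, 'e, 'm) quiver_scheme \<Rightarrow> 'e set \<Rightarrow> 'v \<Rightarrow> 'v \<Rightarrow> ('e \<times> bool) list \<Rightarrow> bool" where
  "tree_walk Q T x y ws \<longleftrightarrow> is_walk Q (x, ws) \<and> (\<forall>s \<in> set ws. fst s \<in> T) \<and> reduced ws
      \<and> wend Q (x, ws) = y"

definition max_tree :: "('v, 'e, 'm) quiver_scheme \<Rightarrow> 'e set \<Rightarrow> bool" where
  "max_tree Q T \<longleftrightarrow> T \<subseteq> arrs Q \<and>
     (\<forall>x \<in> verts Q. \<forall>y \<in> verts Q. \<exists>!ws. tree_walk Q T x y ws)"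

definition gamma :: "('v, 'e, 'm) quiver_scheme \<Rightarrow> 'e set \<Rightarrow> 'v \<Rightarrow> 'v \<Rightarrow> ('v, 'e) walk" where
  "gamma Q T x0 x = (x0, THE ws. tree_walk Q T x0 x ws)"

text \<open>Elements of kQ: finitely supported k-linear combinations of paths.\<close>
definition pathalg :: "('v, 'e, 'm) quiver_scheme \<Rightarrow> (('v, 'e) walk \<Rightarrow> 'k::field) set" where
  "pathalg Q = {c. finite {p. c p \<noteq> 0} \<and> (\<forall>p. c p \<noteq> 0 \<longrightarrow> is_path Q p)}"

definition linext :: "('k::field \<Rightarrow> 'a::ring_1 \<Rightarrow> 'a) \<Rightarrow> (('v, 'e) walk \<Rightarrow> 'a)
    \<Rightarrow> (('v, 'e) walk \<Rightarrow> 'k) \<Rightarrow> 'a" where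
  "linext sc nu c = (\<Sum>p \<in> {p. c p \<noteq> 0}. sc (c p) (nu p))"

text \<open>nu (given on the path basis of kQ) is a presentation of A (the type 'a with scalar
  multiplication sc) sending the trivial paths to the idempotents e x:
  the linear extension is a surjective unital algebra homomorphism kQ -> A
  (multiplication in kQ: v u = concatenation if u ends where v starts, 0 otherwise),
  and its kernel I is admissible: (kQ+)^N \<subseteq> I \<subseteq> (kQ+)^2 for some N \<ge> 2.\<close>
definition presentation :: "('v, 'e, 'm) quiver_scheme \<Rightarrow> ('k::field \<Rightarrow> 'a::ring_1 \<Rightarrow> 'a)
    \<Rightarrow> ('v \<Rightarrow> 'a) \<Rightarrow> (('v, 'e) walk \<Rightarrow> 'a) \<Rightarrow> bool" where
  "presentation Q sc e nu \<longleftrightarrow>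
     (\<forall>x \<in> verts Q. nu (x, []) = e x) \<and>
     (\<Sum>x \<in> verts Q. e x) = 1 \<and>
     (\<forall>u v. is_path Q u \<and> is_path Q v \<longrightarrow>
         nu v * nu u = (if wend Q u = wstart v then nu (wcomp v u) else 0)) \<and>
     (\<forall>a. \<exists>c \<in> pathalg Q. linext sc nu c = a) \<and>
     (\<exists>N \<ge> 2. \<forall>p. is_path Q p \<and> path_len p \<ge> N \<longrightarrow> nu p = 0) \<and>
     (\<forall>c \<in> pathalg Q. linext sc nu c = 0 \<longrightarrow> (\<forall>p. path_len p < 2 \<longrightarrow> c p = 0))"

definition min_relation :: "('v, 'e, 'm) quiver_scheme \<Rightarrow> ('k::field \<Rightarrow> 'a::ring_1 \<Rightarrow> 'a)
    \<Rightarrow> (('v, 'e) walk \<Rightarrow> 'a) \<Rightarrow> (('v, 'e) walk \<Rightarrow> 'k) \<Rightarrow> bool" where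
  "min_relation Q sc nu c \<longleftrightarrow> c \<in> pathalg Q \<and> (\<exists>p. c p \<noteq> 0) \<and> linext sc nu c = 0 \<and>
     (\<forall>S. S \<subseteq> {p. c p \<noteq> 0} \<and> S \<noteq> {} \<and> S \<noteq> {p. c p \<noteq> 0} \<longrightarrow>
        linext sc nu (\<lambda>p. if p \<in> S then c p else 0) \<noteq> 0)"

inductive homot :: "('v, 'e, 'm) quiver_scheme \<Rightarrow> ('k::field \<Rightarrow> 'a::ring_1 \<Rightarrow> 'a)
    \<Rightarrow> (('v, 'e) walk \<Rightarrow> 'a) \<Rightarrow> ('v, 'e) walk \<Rightarrow> ('v, 'e) walk \<Rightarrow> bool"
  for Q sc nu where
  inv_left: "a \<in> arrs Q \<Longrightarrow> homot Q sc nu (src Q a, [(a, True), (a, False)]) (src Q a, [])"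
| inv_right: "a \<in> arrs Q \<Longrightarrow> homot Q sc nu (tgt Q a, [(a, False), (a, True)]) (tgt Q a, [])"
| minrel: "min_relation Q sc nu c \<Longrightarrow> c u \<noteq> 0 \<Longrightarrow> c v \<noteq> 0 \<Longrightarrow> homot Q sc nu u v"
| refl: "is_walk Q w \<Longrightarrow> homot Q sc nu w w"
| sym: "homot Q sc nu v w \<Longrightarrow> homot Q sc nu w v"
| trans: "homot Q sc nu u v \<Longrightarrow> homot Q sc nu v w \<Longrightarrow> homot Q sc nu u w"
| cong: "homot Q sc nu v v' \<Longrightarrow> is_walk Q (wcomp w (wcomp v u)) \<Longrightarrow>
         is_walk Q (wcomp w (wcomp v' u)) \<Longrightarrow>
         homot Q sc nu (wcomp w (wcomp v u)) (wcomp w (wcomp v' u))"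

definition hclass :: "('v, 'e, 'm) quiver_scheme \<Rightarrow> ('k::field \<Rightarrow> 'a::ring_1 \<Rightarrow> 'a)
    \<Rightarrow> (('v, 'e) walk \<Rightarrow> 'a) \<Rightarrow> ('v, 'e) walk \<Rightarrow> ('v, 'e) walk set" where
  "hclass Q sc nu w = {w'. homot Q sc nu w w'}"

definition pi1 :: "('v, 'e, 'm) quiver_scheme \<Rightarrow> ('k::field \<Rightarrow> 'a::ring_1 \<Rightarrow> 'a)
    \<Rightarrow> (('v, 'e) walk \<Rightarrow> 'a) \<Rightarrow> 'v \<Rightarrow> ('v, 'e) walk set monoid" where
  "pi1 Q sc nu x0 =
     \<lparr> carrier = {hclass Q sc nu w | w. is_walk Q w \<and> wstart w = x0 \<and> wend Q w = x0},
       monoid.mult = (\<lambda>C D. hclass Q sc nu (wcomp (SOME w. w \<in> C) (SOME v. v \<in> D))),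
       one = hclass Q sc nu (x0, []) \<rparr>"

definition kplus :: "'k::field monoid" where
  "kplus = \<lparr> carrier = UNIV, monoid.mult = (+), one = 0 \<rparr>"

definition Der0 :: "('k::field \<Rightarrow> 'a::ring_1 \<Rightarrow> 'a) \<Rightarrow> ('v \<Rightarrow> 'a) \<Rightarrow> 'v set \<Rightarrow> ('a \<Rightarrow> 'a) set" where
  "Der0 sc e V = {D. (\<forall>a b. D (a + b) = D a + D b) \<and> (\<forall>c a. D (sc c a) = sc c (D a)) \<and>
      (\<forall>a b. D (a * b) = D a * b + a * D b) \<and> (\<forall>x \<in> V. D (e x) = 0)}"

definition Int0 :: "('k::field \<Rightarrow> 'a::ring_1 \<Rightarrow> 'a) \<Rightarrow> ('v \<Rightarrow> 'a) \<Rightarrow> 'v set \<Rightarrow> ('a \<Rightarrow> 'a) set" where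
  "Int0 sc e V = {D. \<exists>lam::'v \<Rightarrow> 'k. let eps = (\<Sum>x \<in> V. sc (lam x) (e x)) in
      D = (\<lambda>a. eps * a - a * eps)}"

text \<open>Class of a derivation in HH^1(A) = Der0 / Int0.\<close>
definition hh_class :: "('k::field \<Rightarrow> 'a::ring_1 \<Rightarrow> 'a) \<Rightarrow> ('v \<Rightarrow> 'a) \<Rightarrow> 'v set
    \<Rightarrow> ('a \<Rightarrow> 'a) \<Rightarrow> ('a \<Rightarrow> 'a) set" where
  "hh_class sc e V D = {D' \<in> Der0 sc e V. (\<lambda>a. D' a - D a) \<in> Int0 sc e V}"

definition hh_add :: "('k::field \<Rightarrow> 'a::ring_1 \<Rightarrow> 'a) \<Rightarrow> ('v \<Rightarrow> 'a) \<Rightarrow> 'v set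
    \<Rightarrow> ('a \<Rightarrow> 'a) set \<Rightarrow> ('a \<Rightarrow> 'a) set \<Rightarrow> ('a \<Rightarrow> 'a) set" where
  "hh_add sc e V C1 C2 = hh_class sc e V (\<lambda>a. (SOME D. D \<in> C1) a + (SOME D. D \<in> C2) a)"

definition hh_scale :: "('k::field \<Rightarrow> 'a::ring_1 \<Rightarrow> 'a) \<Rightarrow> ('v \<Rightarrow> 'a) \<Rightarrow> 'v set
    \<Rightarrow> 'k \<Rightarrow> ('a \<Rightarrow> 'a) set \<Rightarrow> ('a \<Rightarrow> 'a) set" where
  "hh_scale sc e V c C = hh_class sc e V (\<lambda>a. sc c ((SOME D. D \<in> C) a))"

definition hh_bracket :: "('k::field \<Rightarrow> 'a::ring_1 \<Rightarrow> 'a) \<Rightarrow> ('v \<Rightarrow> 'a) \<Rightarrow> 'v set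
    \<Rightarrow> ('a \<Rightarrow> 'a) set \<Rightarrow> ('a \<Rightarrow> 'a) set \<Rightarrow> ('a \<Rightarrow> 'a) set" where
  "hh_bracket sc e V C1 C2 =
     (let D1 = (SOME D. D \<in> C1); D2 = (SOME D. D \<in> C2) in
      hh_class sc e V (\<lambda>a. D1 (D2 a) - D2 (D1 a)))"

definition is_ftilde :: "('v, 'e, 'm) quiver_scheme \<Rightarrow> ('k::field \<Rightarrow> 'a::ring_1 \<Rightarrow> 'a)
    \<Rightarrow> ('v \<Rightarrow> 'a) \<Rightarrow> (('v, 'e) walk \<Rightarrow> 'a) \<Rightarrow> 'e set \<Rightarrow> 'v
    \<Rightarrow> (('v, 'e) walk set \<Rightarrow> 'k) \<Rightarrow> ('a \<Rightarrow> 'a) \<Rightarrow> bool" where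
  "is_ftilde Q sc e nu T x0 f D \<longleftrightarrow> D \<in> Der0 sc e (verts Q) \<and>
     (\<forall>u. is_path Q u \<longrightarrow>
        D (nu u) = sc (f (hclass Q sc nu
            (wcomp (winv Q (gamma Q T x0 (wend Q u))) (wcomp u (gamma Q T x0 (wstart u))))))
          (nu u))"

definition ftilde where
  "ftilde Q sc e nu T x0 f = (SOME D. is_ftilde Q sc e nu T x0 f D)"

definition theta where
  "theta Q sc e nu T x0 f = hh_class sc e (verts Q) (ftilde Q sc e nu T x0 f)"

end

theory Submission imports Defs begin

context
  fixes sc :: "'k::field \<Rightarrow> 'a::ring_1 \<Rightarrow> 'a"
  assumes kal: "kalgebra sc"
begin

lemma sc_addr: "sc c (a + b) = sc c a + sc c b" using kal unfolding kalgebra_def by blast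
lemma sc_addl: "sc (c + d) a = sc c a + sc d a" using kal unfolding kalgebra_def by blast
lemma sc_mult: "sc (c * d) a = sc c (sc d a)" using kal unfolding kalgebra_def by blast
lemma sc_one: "sc 1 a = a" using kal unfolding kalgebra_def by blast
lemma sc_ml: "sc c (a * b) = sc c a * b" using kal unfolding kalgebra_def by blast
lemma sc_mr: "sc c (a * b) = a * sc c b" using kal unfolding kalgebra_def by blast

lemma sc_0l: "sc 0 a = 0"
proof -
  have "sc (0 + 0) a = sc 0 a + sc 0 a" by (rule sc_addl)
  then show ?thesis by simp
qed

lemma sc_0r: "sc c 0 = 0"
proof -
  have "sc c (0 + 0) = sc c 0 + sc c 0" by (rule sc_addr)
  then show ?thesis by simp
qed

lemma sc_minusr: "sc c (- a) = - sc c a"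
proof -
  have "sc c (a + - a) = sc c a + sc c (- a)" by (rule sc_addr)
  then show ?thesis by (simp add: sc_0r eq_neg_iff_add_eq_0 add.commute)
qed

lemma sc_minusl: "sc (- c) a = - sc c a"
proof -
  have "sc (c + - c) a = sc c a + sc (- c) a" by (rule sc_addl)
  then show ?thesis by (simp add: sc_0l eq_neg_iff_add_eq_0 add.commute)
qed

lemma sc_diffr: "sc c (a - b) = sc c a - sc c b"
  using sc_addr[of c a "- b"] sc_minusr[of c b] by simp

lemma sc_diffl: "sc (c - d) a = sc c a - sc d a"
  using sc_addl[of c "- d" a] sc_minusl[of d a] by simp

lemma sc_sumr: "sc c (sum f S) = (\<Sum>x\<in>S. sc c (f x))"
  by (induction S rule: infinite_finite_induct) (auto simp: sc_0r sc_addr)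

lemma sc_suml: "sc (sum g S) a = (\<Sum>x\<in>S. sc (g x) a)"
  by (induction S rule: infinite_finite_induct) (auto simp: sc_0l sc_addl)

lemma sc_comm: "sc c (sc d a) = sc d (sc c a)"
  by (metis sc_mult mult.commute)

end

section \<open>Linear combinations\<close>

definition lc :: "('k::field \<Rightarrow> 'a::ring_1 \<Rightarrow> 'a) \<Rightarrow> ('p \<Rightarrow> 'a) \<Rightarrow> ('p \<Rightarrow> 'k) \<Rightarrow> 'a" where
  "lc sc F c = (\<Sum>p \<in> {p. c p \<noteq> 0}. sc (c p) (F p))"

lemma linext_lc: "linext sc nu c = lc sc nu c"
  unfolding linext_def lc_def by simp

context
  fixes sc :: "'k::field \<Rightarrow> 'a::ring_1 \<Rightarrow> 'a"
  assumes kal: "kalgebra sc"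
begin

lemma lc_superset:
  assumes "finite S" "{p. c p \<noteq> 0} \<subseteq> S"
  shows "lc sc F c = (\<Sum>p\<in>S. sc (c p) (F p))"
  unfolding lc_def
  by (rule sum.mono_neutral_left) (use assms sc_0l[OF kal] in auto)

lemma lc_add:
  assumes "finite {p. c p \<noteq> 0}" "finite {p. d p \<noteq> 0}"
  shows "lc sc F (\<lambda>p. c p + d p) = lc sc F c + lc sc F d"
proof -
  let ?S = "{p. c p \<noteq> 0} \<union> {p. d p \<noteq> 0}"
  have f: "finite ?S" using assms by simp
  have "lc sc F (\<lambda>p. c p + d p) = (\<Sum>p\<in>?S. sc (c p + d p) (F p))"
    by (rule lc_superset[OF f]) auto
  also have "\<dots> = (\<Sum>p\<in>?S. sc (c p) (F p)) + (\<Sum>p\<in>?S. sc (d p) (F p))"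
    by (simp add: sc_addl[OF kal] sum.distrib)
  also have "\<dots> = lc sc F c + lc sc F d"
    using lc_superset[OF f, of c F] lc_superset[OF f, of d F] by auto
  finally show ?thesis .
qed

lemma lc_scale:
  assumes "finite {p. c p \<noteq> 0}"
  shows "lc sc F (\<lambda>p. k * c p) = sc k (lc sc F c)"
proof -
  have "lc sc F (\<lambda>p. k * c p) = (\<Sum>p\<in>{p. c p \<noteq> 0}. sc (k * c p) (F p))"
    by (rule lc_superset[OF assms]) auto
  also have "\<dots> = sc k (lc sc F c)"
    by (simp add: lc_def sc_sumr[OF kal] sc_mult[OF kal])
  finally show ?thesis .
qed

lemma lc_zero: "lc sc F (\<lambda>p. 0) = 0"
  unfolding lc_def by simp

lemma lc_delta: "lc sc F (\<lambda>p. if p = q then 1 else 0) = F q"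
proof -
  have "{p. (if p = q then 1 else 0) \<noteq> (0::'k)} = {q}" by auto
  then show ?thesis unfolding lc_def by (simp add: sc_one[OF kal])
qed

lemma lc_F_cong:
  assumes "\<And>p. c p \<noteq> 0 \<Longrightarrow> F p = G p"
  shows "lc sc F c = lc sc G c"
  unfolding lc_def using assms by (intro sum.cong) auto

end


section \<open>Walks\<close>

definition invl :: "('e \<times> bool) list \<Rightarrow> ('e \<times> bool) list" where
  "invl l = rev (map (\<lambda>(a, b). (a, \<not> b)) l)"

lemma invl_Nil[simp]: "invl [] = []" by (simp add: invl_def)
lemma invl_Cons[simp]: "invl (s # l) = invl l @ [(fst s, \<not> snd s)]"
  by (cases s) (simp add: invl_def)
lemma invl_append[simp]: "invl (l1 @ l2) = invl l2 @ invl l1" by (simp add: invl_def)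
lemma invl_invl[simp]: "invl (invl l) = l"
  by (induction l) (auto simp: invl_def)
lemma set_invl: "(\<forall>s\<in>set (invl l). P (fst s)) \<longleftrightarrow> (\<forall>s\<in>set l. P (fst s))"
  by (induction l) auto

lemma walk_end_append[simp]: "walk_end Q x (l1 @ l2) = walk_end Q (walk_end Q x l1) l2"
  by (induction l1 arbitrary: x) auto

lemma walk_ok_append[simp]: "walk_ok Q x (l1 @ l2) = (walk_ok Q x l1 \<and> walk_ok Q (walk_end Q x l1) l2)"
  by (induction l1 arbitrary: x) auto

lemma walk_ok_invl:
  "walk_ok Q x l \<Longrightarrow> walk_ok Q (walk_end Q x l) (invl l) \<and> walk_end Q (walk_end Q x l) (invl l) = x"
proof (induction l arbitrary: x)
  case Nil then show ?case by simp
next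
  case (Cons s l)
  obtain a b where s: "s = (a, b)" by (cases s)
  from Cons show ?case by (auto simp: s)
qed

lemma walk_ok_start: "walk_ok Q a l \<Longrightarrow> walk_ok Q b l \<Longrightarrow> l \<noteq> [] \<Longrightarrow> a = b"
  by (cases l) auto

lemma walk_end_verts:
  assumes "finite_quiver Q"
  shows "x \<in> verts Q \<Longrightarrow> \<forall>s\<in>set l. fst s \<in> arrs Q \<Longrightarrow> walk_ok Q x l \<Longrightarrow> walk_end Q x l \<in> verts Q"
proof (induction l arbitrary: x)
  case Nil then show ?case by simp
next
  case (Cons s l)
  obtain a b where s: "s = (a, b)" by (cases s)
  have "a \<in> arrs Q" using Cons.prems s by auto
  then have "step_tgt Q s \<in> verts Q" using assms s unfolding finite_quiver_def by auto
  then show ?case using Cons by auto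
qed

lemma is_walk_pair: "is_walk Q (x, l) \<longleftrightarrow> x \<in> verts Q \<and> (\<forall>s\<in>set l. fst s \<in> arrs Q) \<and> walk_ok Q x l"
  unfolding is_walk_def by simp

lemma wend_pair: "wend Q (x, l) = walk_end Q x l" unfolding wend_def by simp

lemma is_walk_append:
  assumes "finite_quiver Q"
  shows "is_walk Q (x, l1 @ l2) \<longleftrightarrow> is_walk Q (x, l1) \<and> is_walk Q (walk_end Q x l1, l2)"
  using walk_end_verts[OF assms] unfolding is_walk_pair by auto

lemma is_walk_invl:
  assumes "finite_quiver Q" "is_walk Q (x, l)"
  shows "is_walk Q (walk_end Q x l, invl l)" "walk_end Q (walk_end Q x l) (invl l) = x"
  using walk_ok_invl[of Q x l] walk_end_verts[OF assms(1), of x l] assms(2) set_invl[where P="\<lambda>a. a \<in> arrs Q" and l=l]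
  unfolding is_walk_pair by auto


locale ctx4 =
  fixes Q :: "('v, 'e) quiver" and sc :: "'k::field \<Rightarrow> 'a::ring_1 \<Rightarrow> 'a"
    and e :: "'v \<Rightarrow> 'a" and nu :: "('v, 'e) walk \<Rightarrow> 'a" and T :: "'e set" and x0 :: 'v
  assumes kal: "kalgebra sc" and fq: "finite_quiver Q" and pres: "presentation Q sc e nu"
    and x0v: "x0 \<in> verts Q" and mt: "max_tree Q T"
begin

lemma nu_triv: "x \<in> verts Q \<Longrightarrow> nu (x, []) = e x"
  using pres unfolding presentation_def by blast

lemma nu_mult: "is_path Q u \<Longrightarrow> is_path Q v \<Longrightarrow>
   nu v * nu u = (if wend Q u = wstart v then nu (wcomp v u) else 0)"
  using pres unfolding presentation_def by blast

lemma surj: "\<exists>c\<in>pathalg Q. lc sc nu c = a"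
  using pres unfolding presentation_def linext_lc by blast

lemma path_walk: "is_path Q p \<Longrightarrow> is_walk Q p"
  unfolding is_path_def by simp

lemma path_pair: "is_path Q (x, l) \<longleftrightarrow> is_walk Q (x, l) \<and> (\<forall>s\<in>set l. snd s)"
  unfolding is_path_def by simp

lemma triv_path: "x \<in> verts Q \<Longrightarrow> is_path Q (x, [])"
  unfolding is_path_def is_walk_def by simp

lemma wend_verts: "is_walk Q w \<Longrightarrow> wend Q w \<in> verts Q"
  using walk_end_verts[OF fq] unfolding is_walk_def wend_def by blast

lemma wstart_verts: "is_walk Q w \<Longrightarrow> wstart w \<in> verts Q"
  unfolding is_walk_def wstart_def by blast

lemma path_comp: "is_path Q u \<Longrightarrow> is_path Q v \<Longrightarrow> wend Q u = wstart v \<Longrightarrow> is_path Q (wcomp v u)"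
  unfolding is_path_def wcomp_def
  using is_walk_append[OF fq, of "fst u" "snd u" "snd v"]
  by (auto simp: wend_def wstart_def is_walk_def)

lemma e_left: "x \<in> verts Q \<Longrightarrow> is_path Q p \<Longrightarrow> e x * nu p = (if wend Q p = x then nu p else 0)"
  using nu_mult[of p "(x, [])"] triv_path[of x] nu_triv[of x]
  by (auto simp: wstart_def wcomp_def)

lemma e_right: "x \<in> verts Q \<Longrightarrow> is_path Q p \<Longrightarrow> nu p * e x = (if wstart p = x then nu p else 0)"
  using nu_mult[of "(x, [])" p] triv_path[of x] nu_triv[of x]
  by (cases p) (auto simp: wstart_def wcomp_def wend_def)

lemma pathalg_fin: "c \<in> pathalg Q \<Longrightarrow> finite {p. c p \<noteq> 0}"
  unfolding pathalg_def by blast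

lemma pathalg_path: "c \<in> pathalg Q \<Longrightarrow> c p \<noteq> 0 \<Longrightarrow> is_path Q p"
  unfolding pathalg_def by blast

lemma minrel_ends:
  assumes mr: "min_relation Q sc nu c" and cu: "c u \<noteq> 0" and cv: "c v \<noteq> 0"
  shows "fst u = fst v \<and> wend Q u = wend Q v"
proof -
  have cp: "c \<in> pathalg Q" and l0: "linext sc nu c = 0" using mr unfolding min_relation_def by auto
  have fin: "finite {p. c p \<noteq> 0}" using pathalg_fin[OF cp] .
  define x where "x = fst u"
  define y where "y = wend Q u"
  have up: "is_path Q u" using pathalg_path[OF cp cu] .
  have xv: "x \<in> verts Q" using path_walk[OF up] unfolding x_def is_walk_def by auto
  have yv: "y \<in> verts Q" using wend_verts[OF path_walk[OF up]] unfolding y_def .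
  define S where "S = {p. c p \<noteq> 0 \<and> fst p = x \<and> wend Q p = y}"
  have SS: "S \<subseteq> {p. c p \<noteq> 0}" unfolding S_def by auto
  have uS: "u \<in> S" unfolding S_def x_def y_def using cu by auto
  have "e y * lc sc nu c * e x = (\<Sum>p\<in>{p. c p \<noteq> 0}. e y * sc (c p) (nu p) * e x)"
    unfolding lc_def by (simp add: sum_distrib_left sum_distrib_right)
  also have "\<dots> = (\<Sum>p\<in>{p. c p \<noteq> 0}. sc (c p) (e y * nu p * e x))"
    by (rule sum.cong) (simp_all add: sc_ml[OF kal, symmetric] sc_mr[OF kal, symmetric])
  also have "\<dots> = (\<Sum>p\<in>{p. c p \<noteq> 0}. sc (if p \<in> S then c p else 0) (nu p))"
  proof (rule sum.cong)
    fix p assume "p \<in> {p. c p \<noteq> 0}"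
    then have pp: "is_path Q p" using pathalg_path[OF cp] by auto
    show "sc (c p) (e y * nu p * e x) = sc (if p \<in> S then c p else 0) (nu p)"
      using e_left[OF yv pp] e_right[OF xv pp] \<open>p \<in> {p. c p \<noteq> 0}\<close>
      by (auto simp: S_def wstart_def sc_0l[OF kal] sc_0r[OF kal])
  qed simp
  also have "\<dots> = lc sc nu (\<lambda>p. if p \<in> S then c p else 0)"
    by (rule lc_superset[OF kal fin, symmetric]) auto
  finally have "lc sc nu (\<lambda>p. if p \<in> S then c p else 0) = 0"
    using l0 by (simp add: linext_lc)
  then have "S = {p. c p \<noteq> 0}"
    using mr SS uS unfolding min_relation_def linext_lc by blast
  then have "v \<in> S" using cv by auto
  then show ?thesis unfolding S_def x_def y_def by auto
qed

lemma homot_inv: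
  "homot Q sc nu a b \<Longrightarrow> is_walk Q a \<and> is_walk Q b \<and> fst a = fst b \<and> wend Q a = wend Q b"
proof (induction rule: homot.induct)
  case (inv_left a)
  then have "src Q a \<in> verts Q" "tgt Q a \<in> verts Q" using fq unfolding finite_quiver_def by auto
  then show ?case using inv_left by (auto simp: is_walk_def wend_def)
next
  case (inv_right a)
  then have "src Q a \<in> verts Q" "tgt Q a \<in> verts Q" using fq unfolding finite_quiver_def by auto
  then show ?case using inv_right by (auto simp: is_walk_def wend_def)
next
  case (minrel c u v)
  have "c \<in> pathalg Q" using minrel(1) unfolding min_relation_def by auto
  then show ?case using minrel_ends[OF minrel(1-3)] pathalg_path[of c] minrel path_walk by blast
next
  case (refl w) then show ?case by simp
next
  case (sym v w) then show ?case by simp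
next
  case (trans u v w) then show ?case by simp
next
  case (cong v v' w u)
  define z where "z = walk_end Q (fst u) (snd u)"
  have ok1: "walk_ok Q z (snd v)" and ok2: "walk_ok Q z (snd v')"
    using cong(2,3) unfolding is_walk_def wcomp_def z_def by auto
  have okv: "walk_ok Q (fst v) (snd v)" "walk_ok Q (fst v') (snd v')"
    using cong(4) unfolding is_walk_def by auto
  have "walk_end Q z (snd v) = walk_end Q z (snd v')"
  proof (cases "snd v = []")
    case True
    show ?thesis
    proof (cases "snd v' = []")
      case True then show ?thesis using \<open>snd v = []\<close> by simp
    next
      case False
      then have "z = fst v'" using walk_ok_start[OF ok2 okv(2)] by simp
      then show ?thesis using cong(4) \<open>snd v = []\<close> by (auto simp: wend_def)
    qed
  next
    case False
    then have "z = fst v" using walk_ok_start[OF ok1 okv(1)] by simp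
    then show ?thesis using cong(4) by (auto simp: wend_def)
  qed
  then show ?case using cong(2,3) by (auto simp: wcomp_def wend_def z_def)
qed


lemma hclass_eq: "homot Q sc nu a b \<Longrightarrow> hclass Q sc nu a = hclass Q sc nu b"
  unfolding hclass_def by (auto intro: homot.trans homot.sym)

lemma cong':
  assumes "homot Q sc nu v v'" "is_walk Q (x, l1 @ snd v @ l2)" "is_walk Q (x, l1 @ snd v' @ l2)"
  shows "homot Q sc nu (x, l1 @ snd v @ l2) (x, l1 @ snd v' @ l2)"
  using homot.cong[OF assms(1), of "(x, l2)" "(x, l1)"] assms(2,3) by (simp add: wcomp_def)

lemma walk_linv: "is_walk Q (x, l) \<Longrightarrow> is_walk Q (x, l @ invl l)"
  using is_walk_append[OF fq] is_walk_invl[OF fq] by blast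

lemma cancel: "is_walk Q (x, l) \<Longrightarrow> homot Q sc nu (x, l @ invl l) (x, [])"
proof (induction l arbitrary: x)
  case Nil then show ?case by (simp add: homot.refl)
next
  case (Cons s l)
  obtain a b where s: "s = (a, b)" by (cases s)
  have x: "x = step_src Q s" and av: "a \<in> arrs Q" using Cons.prems s by (auto simp: is_walk_def)
  have w1: "is_walk Q (step_tgt Q s, l)"
    using Cons.prems is_walk_append[OF fq, of x "[s]" l] by simp
  have IH: "homot Q sc nu (step_tgt Q s, l @ invl l) (step_tgt Q s, [])" using Cons.IH[OF w1] .
  have wa: "is_walk Q (x, [s] @ snd (step_tgt Q s, l @ invl l) @ [(a, \<not> b)])"
    using walk_linv[OF Cons.prems] s by simp
  have wb: "is_walk Q (x, [s] @ snd (step_tgt Q s, []::('e \<times> bool) list) @ [(a, \<not> b)])"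
    using walk_linv[of x "[s]"] Cons.prems is_walk_append[OF fq, of x "[s]" l] s by simp
  have h1: "homot Q sc nu (x, [s] @ snd (step_tgt Q s, l @ invl l) @ [(a, \<not> b)])
      (x, [s] @ snd (step_tgt Q s, []::('e \<times> bool) list) @ [(a, \<not> b)])"
    by (rule cong'[OF IH wa wb])
  have h2: "homot Q sc nu (x, [(a, b), (a, \<not> b)]) (x, [])"
  proof (cases b)
    case True then show ?thesis using homot.inv_left[OF av] x s by simp
  next
    case False then show ?thesis using homot.inv_right[OF av] x s by simp
  qed
  show ?case using homot.trans[OF h1] h2 s by simp
qed

definition Gm :: "'v \<Rightarrow> ('e \<times> bool) list" where
  "Gm x = snd (gamma Q T x0 x)"

lemma gamma_props: "x \<in> verts Q \<Longrightarrow> is_walk Q (x0, Gm x) \<and> walk_end Q x0 (Gm x) = x"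
proof -
  assume xv: "x \<in> verts Q"
  have "\<exists>!ws. tree_walk Q T x0 x ws" using mt x0v xv unfolding max_tree_def by blast
  then have "tree_walk Q T x0 x (THE ws. tree_walk Q T x0 x ws)" by (rule theI')
  then show ?thesis unfolding Gm_def gamma_def tree_walk_def wend_def by simp
qed

lemma beta_eq: "wcomp (winv Q (gamma Q T x0 y)) (wcomp u (gamma Q T x0 x)) = (x0, Gm x @ snd u @ invl (Gm y))"
  unfolding wcomp_def winv_def Gm_def gamma_def invl_def by simp

lemma beta_walk:
  assumes "is_walk Q u"
  shows "is_walk Q (x0, Gm (wstart u) @ snd u @ invl (Gm (wend Q u)))"
    "walk_end Q x0 (Gm (wstart u) @ snd u @ invl (Gm (wend Q u))) = x0"
proof -
  have xv: "wstart u \<in> verts Q" using wstart_verts[OF assms] .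
  have yv: "wend Q u \<in> verts Q" using wend_verts[OF assms] .
  note gx = gamma_props[OF xv] and gy = gamma_props[OF yv]
  have uw: "is_walk Q (wstart u, snd u)" using assms by (cases u) (simp add: wstart_def)
  have ue: "walk_end Q (wstart u) (snd u) = wend Q u" by (cases u) (simp add: wstart_def wend_def)
  have iw: "is_walk Q (wend Q u, invl (Gm (wend Q u)))" and ie: "walk_end Q (wend Q u) (invl (Gm (wend Q u))) = x0"
    using is_walk_invl[OF fq gy[THEN conjunct1]] gy by auto
  show "is_walk Q (x0, Gm (wstart u) @ snd u @ invl (Gm (wend Q u)))"
    using gx uw ue iw by (simp add: is_walk_append[OF fq])
  show "walk_end Q x0 (Gm (wstart u) @ snd u @ invl (Gm (wend Q u))) = x0"
    using gx ue ie by simp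
qed

definition wt :: "(('v, 'e) walk set \<Rightarrow> 'k) \<Rightarrow> ('v, 'e) walk \<Rightarrow> 'k" where
  "wt f u = f (hclass Q sc nu (wcomp (winv Q (gamma Q T x0 (wend Q u))) (wcomp u (gamma Q T x0 (wstart u)))))"

lemma wt_eq: "wt f u = f (hclass Q sc nu (x0, Gm (wstart u) @ snd u @ invl (Gm (wend Q u))))"
  unfolding wt_def beta_eq ..

lemma wt_minrel:
  assumes "min_relation Q sc nu c" "c u \<noteq> 0" "c v \<noteq> 0"
  shows "wt f u = wt f v"
proof -
  have h: "homot Q sc nu u v" by (rule homot.minrel[OF assms])
  have ends: "wstart u = wstart v" "wend Q u = wend Q v" using minrel_ends[OF assms] by (auto simp: wstart_def)
  have wu: "is_walk Q u" "is_walk Q v" using homot_inv[OF h] by auto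
  show ?thesis unfolding wt_eq ends
    using hclass_eq[OF cong'[OF h beta_walk(1)[OF wu(1), unfolded ends] beta_walk(1)[OF wu(2)]]] by simp
qed


lemma class_carrier: "is_walk Q (x0, l) \<Longrightarrow> walk_end Q x0 l = x0 \<Longrightarrow>
    hclass Q sc nu (x0, l) \<in> carrier (pi1 Q sc nu x0)"
  unfolding pi1_def by (auto simp: wstart_def wend_def)

lemma hom_mult:
  assumes f: "f \<in> hom (pi1 Q sc nu x0) kplus"
    and w1: "is_walk Q (x0, l1)" "walk_end Q x0 l1 = x0"
    and w2: "is_walk Q (x0, l2)" "walk_end Q x0 l2 = x0"
  shows "f (hclass Q sc nu (x0, l2 @ l1)) = f (hclass Q sc nu (x0, l1)) + f (hclass Q sc nu (x0, l2))"
proof -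
  let ?C = "hclass Q sc nu (x0, l1)" and ?D = "hclass Q sc nu (x0, l2)"
  have "f (?C \<otimes>\<^bsub>pi1 Q sc nu x0\<^esub> ?D) = f ?C \<otimes>\<^bsub>kplus\<^esub> f ?D"
    using f class_carrier[OF w1] class_carrier[OF w2] unfolding hom_def by blast
  then have eq: "f (hclass Q sc nu (wcomp (SOME w. w \<in> ?C) (SOME v. v \<in> ?D))) = f ?C + f ?D"
    by (simp add: pi1_def kplus_def)
  define a where "a = (SOME w. w \<in> ?C)"
  define b where "b = (SOME v. v \<in> ?D)"
  have "(x0, l1) \<in> ?C" "(x0, l2) \<in> ?D" unfolding hclass_def using w1 w2 by (auto intro: homot.refl)
  then have "a \<in> ?C" "b \<in> ?D" unfolding a_def b_def by (auto intro: someI)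
  then have ha: "homot Q sc nu (x0, l1) a" and hb: "homot Q sc nu (x0, l2) b" unfolding hclass_def by auto
  have ia: "is_walk Q a" "fst a = x0" "wend Q a = x0" using homot_inv[OF ha] w1 by (auto simp: wend_def)
  have ib: "is_walk Q b" "fst b = x0" "wend Q b = x0" using homot_inv[OF hb] w2 by (auto simp: wend_def)
  have ae: "a = (x0, snd a)" "b = (x0, snd b)" using ia ib by (metis prod.collapse)+
  have wa: "is_walk Q (x0, snd a)" "walk_end Q x0 (snd a) = x0" using ia ae by (metis wend_pair)+
  have wb: "is_walk Q (x0, snd b)" "walk_end Q x0 (snd b) = x0" using ib ae by (metis wend_pair)+
  have wc: "wcomp a b = (x0, [] @ snd b @ snd a)" unfolding wcomp_def using ib by simp
  have s1: "homot Q sc nu (x0, [] @ snd b @ snd a) (x0, [] @ snd (x0, l2) @ snd a)"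
    by (rule cong'[OF homot.sym[OF hb]]) (use wa wb w2 in \<open>simp_all add: is_walk_append[OF fq]\<close>)
  have s2: "homot Q sc nu (x0, l2 @ snd a @ []) (x0, l2 @ snd (x0, l1) @ [])"
    by (rule cong'[OF homot.sym[OF ha]]) (use wa w1 w2 in \<open>simp_all add: is_walk_append[OF fq]\<close>)
  have "homot Q sc nu (wcomp a b) (x0, l2 @ l1)"
    unfolding wc using homot.trans[OF s1] s2 by simp
  then show ?thesis using eq hclass_eq unfolding a_def b_def by metis
qed

lemma wt_comp:
  assumes f: "f \<in> hom (pi1 Q sc nu x0) kplus"
    and p: "is_path Q p" and q: "is_path Q q" and pq: "wend Q p = wstart q"
  shows "wt f (wcomp q p) = wt f q + wt f p"
proof -
  have pw: "is_walk Q p" and qw: "is_walk Q q" using p q path_walk by auto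
  define x where "x = wstart p"
  define y where "y = wend Q p"
  define z where "z = wend Q q"
  have yv: "y \<in> verts Q" using wend_verts[OF pw] y_def by simp
  have qp: "wstart (wcomp q p) = x" "wend Q (wcomp q p) = z"
    using pq unfolding x_def z_def by (cases p; cases q; simp add: wcomp_def wstart_def wend_def)+
  have qpl: "snd (wcomp q p) = snd p @ snd q" by (simp add: wcomp_def)
  note bp = beta_walk[OF pw, folded x_def y_def] and bq = beta_walk[OF qw, folded pq z_def, folded y_def]
  have gy: "is_walk Q (x0, Gm y)" "walk_end Q x0 (Gm y) = y" using gamma_props[OF yv] by auto
  have iy: "is_walk Q (y, invl (Gm y))" using is_walk_invl(1)[OF fq gy(1)] gy(2) by simp
  have canc: "homot Q sc nu (y, invl (Gm y) @ Gm y) (y, [])"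
    using cancel[OF iy] by simp
  have big: "is_walk Q (x0, (Gm x @ snd p @ invl (Gm y)) @ (Gm y @ snd q @ invl (Gm z)))"
    using bp bq by (simp only: is_walk_append[OF fq])
  have small: "is_walk Q (x0, Gm x @ snd (wcomp q p) @ invl (Gm z))"
    using beta_walk(1)[OF path_walk[OF path_comp[OF p q pq]]] qp by simp
  have h: "homot Q sc nu (x0, (Gm x @ snd p) @ snd (y, invl (Gm y) @ Gm y) @ (snd q @ invl (Gm z)))
       (x0, (Gm x @ snd p) @ snd (y, []::('e \<times> bool) list) @ (snd q @ invl (Gm z)))"
    by (rule cong'[OF canc]) (use big small qpl in simp_all)
  have "wt f q + wt f p = f (hclass Q sc nu (x0, (Gm x @ snd p @ invl (Gm y)) @ (Gm y @ snd q @ invl (Gm z))))"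
  proof -
    have wq: "wt f q = f (hclass Q sc nu (x0, Gm y @ snd q @ invl (Gm z)))"
      unfolding wt_eq y_def z_def pq by simp
    have wp: "wt f p = f (hclass Q sc nu (x0, Gm x @ snd p @ invl (Gm y)))"
      unfolding wt_eq y_def x_def by simp
    show ?thesis unfolding wq wp using hom_mult[OF f bq bp] by simp
  qed
  also have "\<dots> = wt f (wcomp q p)"
    unfolding wt_eq qp qpl using hclass_eq[OF h] by simp
  finally show ?thesis by simp
qed


definition lin :: "('a \<Rightarrow> 'a) \<Rightarrow> bool" where
  "lin D \<longleftrightarrow> (\<forall>a b. D (a + b) = D a + D b) \<and> (\<forall>k a. D (sc k a) = sc k (D a))"

lemma lin_add: "lin D \<Longrightarrow> D (a + b) = D a + D b" unfolding lin_def by blast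
lemma lin_sc: "lin D \<Longrightarrow> D (sc k a) = sc k (D a)" unfolding lin_def by blast
lemma lin_0: "lin D \<Longrightarrow> D 0 = 0"
  using lin_add[of D 0 0] by simp

lemma lin_sum: "lin D \<Longrightarrow> D (sum g S) = (\<Sum>x\<in>S. D (g x))"
  by (induction S rule: infinite_finite_induct) (auto simp: lin_0 lin_add)

lemma lin_lc: "lin D \<Longrightarrow> D (lc sc nu c) = lc sc (\<lambda>p. D (nu p)) c"
  unfolding lc_def by (simp add: lin_sum lin_sc)

lemma det:
  assumes "lin D1" "lin D2" "\<And>p. is_path Q p \<Longrightarrow> D1 (nu p) = D2 (nu p)"
  shows "D1 = D2"
proof
  fix a
  obtain c where c: "c \<in> pathalg Q" "lc sc nu c = a" using surj by blast
  have "D1 a = lc sc (\<lambda>p. D1 (nu p)) c" using lin_lc[OF assms(1), of c] c(2) by simp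
  also have "\<dots> = lc sc (\<lambda>p. D2 (nu p)) c"
    by (rule lc_F_cong[OF kal]) (use assms(3) pathalg_path[OF c(1)] in auto)
  also have "\<dots> = D2 a" using lin_lc[OF assms(2), of c] c(2) by simp
  finally show "D1 a = D2 a" .
qed

lemma pathalg_add: "c \<in> pathalg Q \<Longrightarrow> d \<in> pathalg Q \<Longrightarrow> (\<lambda>p. c p + d p) \<in> pathalg Q"
proof -
  assume c: "c \<in> pathalg Q" and d: "d \<in> pathalg Q"
  have "{p. c p + d p \<noteq> 0} \<subseteq> {p. c p \<noteq> 0} \<union> {p. d p \<noteq> 0}" by auto
  then have "finite {p. c p + d p \<noteq> 0}" using pathalg_fin[OF c] pathalg_fin[OF d] finite_subset by blast
  moreover have "\<forall>p. c p + d p \<noteq> 0 \<longrightarrow> is_path Q p"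
    using pathalg_path[OF c] pathalg_path[OF d] by force
  ultimately show ?thesis unfolding pathalg_def by blast
qed

lemma pathalg_scale: "c \<in> pathalg Q \<Longrightarrow> (\<lambda>p. k * c p) \<in> pathalg Q"
proof -
  assume c: "c \<in> pathalg Q"
  have "{p. k * c p \<noteq> 0} \<subseteq> {p. c p \<noteq> 0}" by auto
  then have "finite {p. k * c p \<noteq> 0}" using pathalg_fin[OF c] finite_subset by blast
  moreover have "\<forall>p. k * c p \<noteq> 0 \<longrightarrow> is_path Q p"
    using pathalg_path[OF c] by force
  ultimately show ?thesis unfolding pathalg_def by blast
qed

lemma pathalg_restrict: "c \<in> pathalg Q \<Longrightarrow> (\<lambda>p. if p \<in> S then c p else 0) \<in> pathalg Q"
proof -
  assume c: "c \<in> pathalg Q"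
  have "{p. (if p \<in> S then c p else 0) \<noteq> 0} \<subseteq> {p. c p \<noteq> 0}" by auto
  then have "finite {p. (if p \<in> S then c p else 0) \<noteq> 0}" using pathalg_fin[OF c] finite_subset by blast
  moreover have "\<forall>p. (if p \<in> S then c p else 0) \<noteq> 0 \<longrightarrow> is_path Q p"
    using pathalg_path[OF c] by (auto split: if_splits)
  ultimately show ?thesis unfolding pathalg_def by blast
qed

lemma pathalg_delta: "is_path Q q \<Longrightarrow> (\<lambda>p. if p = q then 1 else 0) \<in> pathalg Q"
proof -
  assume q: "is_path Q q"
  have "{p. (if p = q then 1 else 0) \<noteq> (0::'k)} = {q}" by auto
  then show ?thesis unfolding pathalg_def using q by auto
qed

lemma ker:
  assumes H: "\<And>c u v. min_relation Q sc nu c \<Longrightarrow> c u \<noteq> 0 \<Longrightarrow> c v \<noteq> 0 \<Longrightarrow> w u = w v"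
  shows "c \<in> pathalg Q \<Longrightarrow> lc sc nu c = 0 \<Longrightarrow> lc sc (\<lambda>p. sc (w p) (nu p)) c = 0"
proof (induction "card {p. c p \<noteq> 0}" arbitrary: c rule: less_induct)
  case less
  note cp = less.prems(1) and l0 = less.prems(2)
  have fin: "finite {p. c p \<noteq> 0}" using pathalg_fin[OF cp] .
  show ?case
  proof (cases "\<exists>p. c p \<noteq> 0")
    case False
    then have "{p. c p \<noteq> 0} = {}" by auto
    then show ?thesis unfolding lc_def by (simp only: sum.empty)
  next
    case True
    then obtain p0 where p0: "c p0 \<noteq> 0" by blast
    show ?thesis
    proof (cases "min_relation Q sc nu c")
      case True
      have "lc sc (\<lambda>p. sc (w p) (nu p)) c = (\<Sum>p\<in>{p. c p \<noteq> 0}. sc (w p0) (sc (c p) (nu p)))"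
        unfolding lc_def
      proof (rule sum.cong)
        fix p assume "p \<in> {p. c p \<noteq> 0}"
        then have "w p = w p0" by (intro H[OF True]) (use p0 in auto)
        then show "sc (c p) (sc (w p) (nu p)) = sc (w p0) (sc (c p) (nu p))"
          using sc_comm[OF kal, of "c p" "w p0" "nu p"] by simp
      qed simp
      also have "\<dots> = sc (w p0) (lc sc nu c)"
        unfolding lc_def by (simp add: sc_sumr[OF kal])
      finally show ?thesis using l0 sc_0r[OF kal] by simp
    next
      case False
      then obtain S where S: "S \<subseteq> {p. c p \<noteq> 0}" "S \<noteq> {}" "S \<noteq> {p. c p \<noteq> 0}"
          "linext sc nu (\<lambda>p. if p \<in> S then c p else 0) = 0"
        using cp l0 True unfolding min_relation_def linext_lc by blast
      define c1 where "c1 = (\<lambda>p. if p \<in> S then c p else 0)"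
      define c2 where "c2 = (\<lambda>p. if p \<in> - S then c p else 0)"
      have c12: "c = (\<lambda>p. c1 p + c2 p)" unfolding c1_def c2_def by auto
      have c1p: "c1 \<in> pathalg Q" and c2p: "c2 \<in> pathalg Q"
        unfolding c1_def c2_def using pathalg_restrict[OF cp] by blast+
      have s1: "{p. c1 p \<noteq> 0} = S" unfolding c1_def using S(1) by auto
      have s2: "{p. c2 p \<noteq> 0} = {p. c p \<noteq> 0} - S" unfolding c2_def by auto
      have card1: "card {p. c1 p \<noteq> 0} < card {p. c p \<noteq> 0}"
        unfolding s1 using S(1,3) fin by (simp add: psubset_card_mono psubset_eq)
      have card2: "card {p. c2 p \<noteq> 0} < card {p. c p \<noteq> 0}"
        unfolding s2 using S(1,2) fin by (intro psubset_card_mono) auto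
      have l1: "lc sc nu c1 = 0" using S(4) unfolding c1_def linext_lc .
      have "lc sc nu c = lc sc nu c1 + lc sc nu c2"
        by (subst c12) (rule lc_add[OF kal pathalg_fin[OF c1p] pathalg_fin[OF c2p]])
      then have l2: "lc sc nu c2 = 0" using l0 l1 by simp
      have "lc sc (\<lambda>p. sc (w p) (nu p)) c = lc sc (\<lambda>p. sc (w p) (nu p)) c1 + lc sc (\<lambda>p. sc (w p) (nu p)) c2"
        by (subst c12) (rule lc_add[OF kal pathalg_fin[OF c1p] pathalg_fin[OF c2p]])
      then show ?thesis using less.hyps[OF card1 c1p l1] less.hyps[OF card2 c2p l2] by simp
    qed
  qed
qed


definition Dw :: "(('v, 'e) walk \<Rightarrow> 'k) \<Rightarrow> 'a \<Rightarrow> 'a" where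
  "Dw w a = lc sc (\<lambda>p. sc (w p) (nu p)) (SOME c. c \<in> pathalg Q \<and> lc sc nu c = a)"

context
  fixes w :: "('v, 'e) walk \<Rightarrow> 'k"
  assumes H: "\<And>c u v. min_relation Q sc nu c \<Longrightarrow> c u \<noteq> 0 \<Longrightarrow> c v \<noteq> 0 \<Longrightarrow> w u = w v"
begin

lemma Dw_lc:
  assumes c: "c \<in> pathalg Q"
  shows "Dw w (lc sc nu c) = lc sc (\<lambda>p. sc (w p) (nu p)) c"
proof -
  define c' where "c' = (SOME c'. c' \<in> pathalg Q \<and> lc sc nu c' = lc sc nu c)"
  have "c' \<in> pathalg Q \<and> lc sc nu c' = lc sc nu c"
    unfolding c'_def by (rule someI[of _ c]) (use c in simp)
  then have c'p: "c' \<in> pathalg Q" and c'l: "lc sc nu c' = lc sc nu c" by auto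
  define d where "d = (\<lambda>p. c' p + (- 1) * c p)"
  have dp: "d \<in> pathalg Q" unfolding d_def by (intro pathalg_add pathalg_scale c'p c)
  have fc: "finite {p. (- 1) * c p \<noteq> 0}" using pathalg_fin[OF pathalg_scale[OF c]] .
  have "lc sc nu d = lc sc nu c' + sc (- 1) (lc sc nu c)"
    unfolding d_def by (simp only: lc_add[OF kal pathalg_fin[OF c'p] fc] lc_scale[OF kal pathalg_fin[OF c]])
  then have "lc sc nu d = 0" using c'l sc_minusl[OF kal, of 1] sc_one[OF kal] by simp
  then have "lc sc (\<lambda>p. sc (w p) (nu p)) d = 0"
  proof (rule ker[where w=w, rotated 2])
    show "d \<in> pathalg Q" by (rule dp)
  next
    fix c u v assume "min_relation Q sc nu c" "c u \<noteq> 0" "c v \<noteq> 0"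
    then show "w u = w v" by (rule H)
  qed
  moreover have "lc sc (\<lambda>p. sc (w p) (nu p)) d = lc sc (\<lambda>p. sc (w p) (nu p)) c' + sc (- 1) (lc sc (\<lambda>p. sc (w p) (nu p)) c)"
    unfolding d_def by (simp only: lc_add[OF kal pathalg_fin[OF c'p] fc] lc_scale[OF kal pathalg_fin[OF c]])
  ultimately have "lc sc (\<lambda>p. sc (w p) (nu p)) c' = lc sc (\<lambda>p. sc (w p) (nu p)) c"
    using sc_minusl[OF kal, of 1] sc_one[OF kal] by (simp add: eq_neg_iff_add_eq_0)
  then show ?thesis unfolding Dw_def c'_def by simp
qed

lemma Dw_lin: "lin (Dw w)"
  unfolding lin_def
proof (intro conjI allI)
  fix a b
  obtain c where c: "c \<in> pathalg Q" "lc sc nu c = a" using surj by blast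
  obtain d where d: "d \<in> pathalg Q" "lc sc nu d = b" using surj by blast
  have "a + b = lc sc nu (\<lambda>p. c p + d p)"
    using lc_add[OF kal pathalg_fin[OF c(1)] pathalg_fin[OF d(1)]] c d by simp
  then show "Dw w (a + b) = Dw w a + Dw w b"
    using Dw_lc[OF pathalg_add[OF c(1) d(1)]] Dw_lc[OF c(1)] Dw_lc[OF d(1)] c(2) d(2)
      lc_add[OF kal pathalg_fin[OF c(1)] pathalg_fin[OF d(1)]] by simp
next
  fix k a
  obtain c where c: "c \<in> pathalg Q" "lc sc nu c = a" using surj by blast
  have "sc k a = lc sc nu (\<lambda>p. k * c p)"
    using lc_scale[OF kal pathalg_fin[OF c(1)]] c by simp
  then show "Dw w (sc k a) = sc k (Dw w a)"
    using Dw_lc[OF pathalg_scale[OF c(1)]] Dw_lc[OF c(1)] c(2)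
      lc_scale[OF kal pathalg_fin[OF c(1)]] by simp
qed

lemma Dw_nu: "is_path Q p \<Longrightarrow> Dw w (nu p) = sc (w p) (nu p)"
  using Dw_lc[OF pathalg_delta, of p] lc_delta[OF kal, of nu p] lc_delta[OF kal, of "\<lambda>p. sc (w p) (nu p)" p]
  by simp

lemma Dw_leibniz:
  assumes P: "\<And>p q. is_path Q p \<Longrightarrow> is_path Q q \<Longrightarrow> wend Q p = wstart q \<Longrightarrow> w (wcomp q p) = w q + w p"
  shows "Dw w (a * b) = Dw w a * b + a * Dw w b"
proof -
  note L = Dw_lin
  have step1: "Dw w (nu p * b) = Dw w (nu p) * b + nu p * Dw w b" if p: "is_path Q p" for p b
  proof -
    have l1: "lin (\<lambda>b. Dw w (nu p * b))"
      unfolding lin_def by (simp add: distrib_left lin_add[OF L] sc_mr[OF kal, symmetric] lin_sc[OF L])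
    have l2: "lin (\<lambda>b. Dw w (nu p) * b + nu p * Dw w b)"
      unfolding lin_def by (simp add: distrib_left lin_add[OF L] sc_mr[OF kal, symmetric] lin_sc[OF L] sc_addr[OF kal])
    have "(\<lambda>b. Dw w (nu p * b)) = (\<lambda>b. Dw w (nu p) * b + nu p * Dw w b)"
    proof (rule det[OF l1 l2])
      fix q assume q: "is_path Q q"
      have "sc (w p + w q) (nu p * nu q) = sc (w p) (nu p * nu q) + sc (w q) (nu p * nu q)"
        by (rule sc_addl[OF kal])
      also have "\<dots> = sc (w p) (nu p) * nu q + nu p * sc (w q) (nu q)"
        using sc_ml[OF kal, of "w p" "nu p" "nu q"] sc_mr[OF kal, of "w q" "nu p" "nu q"] by simp
      finally have rhs: "Dw w (nu p) * nu q + nu p * Dw w (nu q) = sc (w p + w q) (nu p * nu q)"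
        using Dw_nu[OF p] Dw_nu[OF q] by simp
      show "Dw w (nu p * nu q) = Dw w (nu p) * nu q + nu p * Dw w (nu q)"
      proof (cases "wend Q q = wstart p")
        case True
        have "Dw w (nu p * nu q) = sc (w (wcomp p q)) (nu (wcomp p q))"
          using nu_mult[OF q p] True Dw_nu[OF path_comp[OF q p True]] by simp
        also have "\<dots> = sc (w p + w q) (nu p * nu q)"
          using nu_mult[OF q p] True P[OF q p True] by simp
        finally show ?thesis using rhs by simp
      next
        case False
        then show ?thesis using rhs nu_mult[OF q p] lin_0[OF L] sc_0r[OF kal] by simp
      qed
    qed
    then show ?thesis by metis
  qed
  have l1: "lin (\<lambda>a. Dw w (a * b))"
    unfolding lin_def by (simp add: distrib_right lin_add[OF L] sc_ml[OF kal, symmetric] lin_sc[OF L])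
  have l2: "lin (\<lambda>a. Dw w a * b + a * Dw w b)"
    unfolding lin_def by (simp add: distrib_right lin_add[OF L] sc_ml[OF kal, symmetric] lin_sc[OF L] sc_addr[OF kal])
  have "(\<lambda>a. Dw w (a * b)) = (\<lambda>a. Dw w a * b + a * Dw w b)"
    by (rule det[OF l1 l2]) (rule step1)
  then show ?thesis by metis
qed

end


lemma hom_cases:
  assumes "f \<in> hom (pi1 Q sc nu x0) kplus"
  shows "\<And>c u v. min_relation Q sc nu c \<Longrightarrow> c u \<noteq> 0 \<Longrightarrow> c v \<noteq> 0 \<Longrightarrow> wt f u = wt f v"
    and "\<And>p q. is_path Q p \<Longrightarrow> is_path Q q \<Longrightarrow> wend Q p = wstart q \<Longrightarrow> wt f (wcomp q p) = wt f q + wt f p"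
  using wt_minrel wt_comp[OF assms] by blast+

lemma Dwf_lin: "lin (Dw (wt f))"
  by (rule Dw_lin) (rule wt_minrel)

lemma Dwf_nu: "is_path Q p \<Longrightarrow> Dw (wt f) (nu p) = sc (wt f p) (nu p)"
  by (rule Dw_nu) (erule wt_minrel; assumption)+

lemma Dwf_leibniz:
  assumes f: "f \<in> hom (pi1 Q sc nu x0) kplus"
  shows "Dw (wt f) (a * b) = Dw (wt f) a * b + a * Dw (wt f) b"
proof (rule Dw_leibniz)
  fix c u v assume "min_relation Q sc nu c" "c u \<noteq> 0" "c v \<noteq> 0"
  then show "wt f u = wt f v" by (rule wt_minrel)
next
  fix p q assume "is_path Q p" "is_path Q q" "wend Q p = wstart q"
  then show "wt f (wcomp q p) = wt f q + wt f p" by (rule wt_comp[OF f])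
qed

lemma wt_triv: "f \<in> hom (pi1 Q sc nu x0) kplus \<Longrightarrow> x \<in> verts Q \<Longrightarrow> wt f (x, []) = 0"
proof -
  assume f: "f \<in> hom (pi1 Q sc nu x0) kplus" and xv: "x \<in> verts Q"
  have "wt f (wcomp (x, []) (x, [])) = wt f (x, []) + wt f (x, [])"
    by (rule wt_comp[OF f triv_path[OF xv] triv_path[OF xv]]) (simp add: wstart_def wend_def)
  then have "wt f (x, []) = wt f (x, []) + wt f (x, [])" by (simp only: wcomp_def fst_conv snd_conv append_Nil)
  then show ?thesis by (metis add_cancel_right_right)
qed

lemma is_ftilde_Dw:
  assumes f: "f \<in> hom (pi1 Q sc nu x0) kplus"
  shows "is_ftilde Q sc e nu T x0 f (Dw (wt f))"
proof -
  note H = hom_cases(1)[OF f] and P = hom_cases(2)[OF f]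
  have L: "lin (Dw (wt f))" by (rule Dwf_lin)
  have "Dw (wt f) \<in> Der0 sc e (verts Q)"
    unfolding Der0_def
  proof (intro CollectI conjI allI ballI)
    fix a b show "Dw (wt f) (a + b) = Dw (wt f) a + Dw (wt f) b" by (rule lin_add[OF L])
  next
    fix k a show "Dw (wt f) (sc k a) = sc k (Dw (wt f) a)" by (rule lin_sc[OF L])
  next
    fix a b show "Dw (wt f) (a * b) = Dw (wt f) a * b + a * Dw (wt f) b"
      by (rule Dwf_leibniz[OF f])
  next
    fix x assume xv: "x \<in> verts Q"
    show "Dw (wt f) (e x) = 0"
      using Dwf_nu[OF triv_path[OF xv]] nu_triv[OF xv] wt_triv[OF f xv] sc_0l[OF kal] by simp
  qed
  moreover have "\<forall>u. is_path Q u \<longrightarrow> Dw (wt f) (nu u) = sc (wt f u) (nu u)"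
    using Dwf_nu by blast
  ultimately show ?thesis unfolding is_ftilde_def wt_def by simp
qed

lemma der0_lin: "D \<in> Der0 sc e V \<Longrightarrow> lin D"
  unfolding Der0_def lin_def by blast

lemma ftilde_eq:
  assumes f: "f \<in> hom (pi1 Q sc nu x0) kplus"
  shows "ftilde Q sc e nu T x0 f = Dw (wt f)"
proof -
  have "is_ftilde Q sc e nu T x0 f (ftilde Q sc e nu T x0 f)"
    using is_ftilde_Dw[OF f] unfolding ftilde_def by (rule someI[where P="is_ftilde Q sc e nu T x0 f"])
  then have D: "ftilde Q sc e nu T x0 f \<in> Der0 sc e (verts Q)"
    "\<And>u. is_path Q u \<Longrightarrow> ftilde Q sc e nu T x0 f (nu u) = sc (wt f u) (nu u)"
    unfolding is_ftilde_def wt_def by auto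
  show ?thesis
    by (rule det[OF der0_lin[OF D(1)] Dwf_lin]) (simp add: D(2) Dwf_nu)
qed

definition Epsv :: "('v \<Rightarrow> 'k) \<Rightarrow> 'a" where
  "Epsv lam = (\<Sum>x\<in>verts Q. sc (lam x) (e x))"

lemma Int0_iff: "I \<in> Int0 sc e (verts Q) \<longleftrightarrow> (\<exists>lam. I = (\<lambda>a. Epsv lam * a - a * Epsv lam))"
  unfolding Int0_def Epsv_def Let_def by simp

lemma int0_zero: "(\<lambda>a. 0) \<in> Int0 sc e (verts Q)"
proof -
  have "Epsv (\<lambda>x. 0) = 0" unfolding Epsv_def by (simp add: sc_0l[OF kal])
  then show ?thesis unfolding Int0_iff by (intro exI[of _ "\<lambda>x. 0"]) simp
qed

lemma int0_add: "I1 \<in> Int0 sc e (verts Q) \<Longrightarrow> I2 \<in> Int0 sc e (verts Q) \<Longrightarrow> (\<lambda>a. I1 a + I2 a) \<in> Int0 sc e (verts Q)"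
proof -
  assume "I1 \<in> Int0 sc e (verts Q)" "I2 \<in> Int0 sc e (verts Q)"
  then obtain l1 l2 where l: "I1 = (\<lambda>a. Epsv l1 * a - a * Epsv l1)" "I2 = (\<lambda>a. Epsv l2 * a - a * Epsv l2)"
    unfolding Int0_iff by blast
  have E: "Epsv (\<lambda>x. l1 x + l2 x) = Epsv l1 + Epsv l2" unfolding Epsv_def by (simp add: sc_addl[OF kal] sum.distrib)
  show ?thesis unfolding Int0_iff
    by (intro exI[of _ "\<lambda>x. l1 x + l2 x"]) (simp add: l E algebra_simps)
qed

lemma int0_scale: "I \<in> Int0 sc e (verts Q) \<Longrightarrow> (\<lambda>a. sc k (I a)) \<in> Int0 sc e (verts Q)"
proof -
  assume "I \<in> Int0 sc e (verts Q)"
  then obtain l where l: "I = (\<lambda>a. Epsv l * a - a * Epsv l)" unfolding Int0_iff by blast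
  have E: "Epsv (\<lambda>x. k * l x) = sc k (Epsv l)" unfolding Epsv_def by (simp add: sc_sumr[OF kal] sc_mult[OF kal])
  show ?thesis unfolding Int0_iff
    by (intro exI[of _ "\<lambda>x. k * l x"])
       (simp add: l E sc_diffr[OF kal] sc_ml[OF kal, of k "Epsv l"] sc_mr[OF kal, of k _ "Epsv l"])
qed

lemma int0_neg: "I \<in> Int0 sc e (verts Q) \<Longrightarrow> (\<lambda>a. - I a) \<in> Int0 sc e (verts Q)"
  using int0_scale[of I "- 1"] sc_minusl[OF kal, of 1] sc_one[OF kal] by simp

lemma Epsv_left: "is_path Q p \<Longrightarrow> Epsv lam * nu p = sc (lam (wend Q p)) (nu p)"
proof -
  assume p: "is_path Q p"
  have yv: "wend Q p \<in> verts Q" using wend_verts[OF path_walk[OF p]] .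
  have "Epsv lam * nu p = (\<Sum>x\<in>verts Q. sc (lam x) (e x * nu p))"
    unfolding Epsv_def by (simp add: sum_distrib_right sc_ml[OF kal])
  also have "\<dots> = (\<Sum>x\<in>verts Q. if x = wend Q p then sc (lam x) (nu p) else 0)"
    by (rule sum.cong) (auto simp: e_left[OF _ p] sc_0r[OF kal])
  also have "\<dots> = sc (lam (wend Q p)) (nu p)" using yv fq unfolding finite_quiver_def by simp
  finally show ?thesis .
qed

lemma Epsv_right: "is_path Q p \<Longrightarrow> nu p * Epsv lam = sc (lam (wstart p)) (nu p)"
proof -
  assume p: "is_path Q p"
  have xv: "wstart p \<in> verts Q" using wstart_verts[OF path_walk[OF p]] .
  have "nu p * Epsv lam = (\<Sum>x\<in>verts Q. sc (lam x) (nu p * e x))"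
    unfolding Epsv_def by (simp add: sum_distrib_left sc_mr[OF kal])
  also have "\<dots> = (\<Sum>x\<in>verts Q. if x = wstart p then sc (lam x) (nu p) else 0)"
    by (rule sum.cong) (auto simp: e_right[OF _ p] sc_0r[OF kal])
  also have "\<dots> = sc (lam (wstart p)) (nu p)" using xv fq unfolding finite_quiver_def by simp
  finally show ?thesis .
qed

lemma int0_diag:
  assumes "I \<in> Int0 sc e (verts Q)"
  shows "lin I" "is_path Q p \<Longrightarrow> \<exists>\<phi>. I (nu p) = sc \<phi> (nu p)"
proof -
  obtain l where l: "I = (\<lambda>a. Epsv l * a - a * Epsv l)" using assms unfolding Int0_iff by blast
  show "lin I" unfolding lin_def l
  proof (intro conjI allI)
    fix a b show "Epsv l * (a + b) - (a + b) * Epsv l = Epsv l * a - a * Epsv l + (Epsv l * b - b * Epsv l)"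
      by (simp add: algebra_simps)
  next
    fix k a show "Epsv l * sc k a - sc k a * Epsv l = sc k (Epsv l * a - a * Epsv l)"
      by (simp add: sc_diffr[OF kal] sc_mr[OF kal, of k "Epsv l" a] sc_ml[OF kal, of k a "Epsv l"])
  qed
  assume p: "is_path Q p"
  show "\<exists>\<phi>. I (nu p) = sc \<phi> (nu p)"
    by (intro exI[of _ "l (wend Q p) - l (wstart p)"])
       (simp add: l Epsv_left[OF p] Epsv_right[OF p] sc_diffl[OF kal])
qed

lemma hh_class_eq:
  assumes "(\<lambda>a. X a - Y a) \<in> Int0 sc e (verts Q)"
  shows "hh_class sc e (verts Q) X = hh_class sc e (verts Q) Y"
proof -
  have *: "(\<lambda>a. D a - Y a) \<in> Int0 sc e (verts Q)" if "(\<lambda>a. D a - X a) \<in> Int0 sc e (verts Q)"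
      "(\<lambda>a. X a - Y a) \<in> Int0 sc e (verts Q)" for D X Y
    using int0_add[OF that] by simp
  have "(\<lambda>a. Y a - X a) \<in> Int0 sc e (verts Q)" using int0_neg[OF assms] by simp
  then show ?thesis unfolding hh_class_def using *[of _ X Y] *[of _ Y X] assms by blast
qed

lemma diag_comm:
  assumes A: "lin A" "\<And>p. is_path Q p \<Longrightarrow> \<exists>\<alpha>. A (nu p) = sc \<alpha> (nu p)"
    and B: "lin B" "\<And>p. is_path Q p \<Longrightarrow> \<exists>\<beta>. B (nu p) = sc \<beta> (nu p)"
  shows "(\<lambda>a. A (B a) - B (A a)) = (\<lambda>a. 0)"
proof (rule det)
  show "lin (\<lambda>a. A (B a) - B (A a))" using A(1) B(1) unfolding lin_def by (simp add: sc_diffr[OF kal])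
  show "lin (\<lambda>a. 0)" unfolding lin_def by (simp add: sc_0r[OF kal])
  fix p assume p: "is_path Q p"
  obtain \<alpha> \<beta> where ab: "A (nu p) = sc \<alpha> (nu p)" "B (nu p) = sc \<beta> (nu p)" using A(2)[OF p] B(2)[OF p] by blast
  show "A (B (nu p)) - B (A (nu p)) = 0"
    using ab lin_sc[OF A(1)] lin_sc[OF B(1)] sc_comm[OF kal, of \<alpha> \<beta> "nu p"] by simp
qed


lemma theta_eq: "f \<in> hom (pi1 Q sc nu x0) kplus \<Longrightarrow> theta Q sc e nu T x0 f = hh_class sc e (verts Q) (Dw (wt f))"
  unfolding theta_def by (simp add: ftilde_eq)

lemma rep_props:
  assumes f: "f \<in> hom (pi1 Q sc nu x0) kplus"
  defines "D1 \<equiv> (SOME D. D \<in> theta Q sc e nu T x0 f)"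
  shows "D1 \<in> Der0 sc e (verts Q)" "(\<lambda>a. D1 a - Dw (wt f) a) \<in> Int0 sc e (verts Q)"
    "lin D1" "\<And>p. is_path Q p \<Longrightarrow> \<exists>\<alpha>. D1 (nu p) = sc \<alpha> (nu p)"
proof -
  have "Dw (wt f) \<in> Der0 sc e (verts Q)" using is_ftilde_Dw[OF f] unfolding is_ftilde_def by blast
  then have "Dw (wt f) \<in> theta Q sc e nu T x0 f"
    unfolding theta_eq[OF f] hh_class_def using int0_zero by simp
  then have "D1 \<in> theta Q sc e nu T x0 f" unfolding D1_def by (rule someI[where P="\<lambda>D. D \<in> theta Q sc e nu T x0 f"])
  then show D: "D1 \<in> Der0 sc e (verts Q)" and I: "(\<lambda>a. D1 a - Dw (wt f) a) \<in> Int0 sc e (verts Q)"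
    unfolding theta_eq[OF f] hh_class_def by auto
  show "lin D1" by (rule der0_lin[OF D])
  fix p assume p: "is_path Q p"
  obtain \<phi> where \<phi>: "D1 (nu p) - Dw (wt f) (nu p) = sc \<phi> (nu p)" using int0_diag(2)[OF I p] by auto
  show "\<exists>\<alpha>. D1 (nu p) = sc \<alpha> (nu p)"
    by (intro exI[of _ "wt f p + \<phi>"]) (use \<phi> Dwf_nu[OF p] in \<open>simp add: sc_addl[OF kal] algebra_simps\<close>)
qed

lemma hom_add: "f \<in> hom (pi1 Q sc nu x0) kplus \<Longrightarrow> g \<in> hom (pi1 Q sc nu x0) kplus \<Longrightarrow>
   (\<lambda>C. f C + g C) \<in> hom (pi1 Q sc nu x0) kplus"
  unfolding hom_def kplus_def by (auto simp: algebra_simps)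

lemma hom_scale: "f \<in> hom (pi1 Q sc nu x0) kplus \<Longrightarrow> (\<lambda>C. c * f C) \<in> hom (pi1 Q sc nu x0) kplus"
  unfolding hom_def kplus_def by (auto simp: algebra_simps)

lemma hom_zero: "(\<lambda>C. 0) \<in> hom (pi1 Q sc nu x0) kplus"
  unfolding hom_def kplus_def by auto

lemma main:
  "\<forall>f \<in> hom (pi1 Q sc nu x0) kplus. \<forall>g \<in> hom (pi1 Q sc nu x0) kplus. \<forall>c::'k.
      (\<exists>D. is_ftilde Q sc e nu T x0 f D) \<and>
      theta Q sc e nu T x0 (\<lambda>C. f C + g C)
        = hh_add sc e (verts Q) (theta Q sc e nu T x0 f) (theta Q sc e nu T x0 g) \<and>
      theta Q sc e nu T x0 (\<lambda>C. c * f C)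
        = hh_scale sc e (verts Q) c (theta Q sc e nu T x0 f) \<and>
      hh_bracket sc e (verts Q) (theta Q sc e nu T x0 f) (theta Q sc e nu T x0 g)
        = theta Q sc e nu T x0 (\<lambda>C. 0)"
proof (intro ballI allI conjI)
  fix f g :: "('v, 'e) walk set \<Rightarrow> 'k" and c :: 'k
  assume f: "f \<in> hom (pi1 Q sc nu x0) kplus" and g: "g \<in> hom (pi1 Q sc nu x0) kplus"
  define F where "F = Dw (wt f)"
  define G where "G = Dw (wt g)"
  define D1 where "D1 = (SOME D. D \<in> theta Q sc e nu T x0 f)"
  define D2 where "D2 = (SOME D. D \<in> theta Q sc e nu T x0 g)"
  note r1 = rep_props[OF f, folded D1_def F_def] and r2 = rep_props[OF g, folded D2_def G_def]
  have LF: "lin F" "lin G" unfolding F_def G_def by (rule Dwf_lin)+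
  show "\<exists>D. is_ftilde Q sc e nu T x0 f D" using is_ftilde_Dw[OF f] by blast
  have e1: "Dw (wt (\<lambda>C. f C + g C)) = (\<lambda>a. F a + G a)"
  proof (rule det[OF Dwf_lin])
    show "lin (\<lambda>a. F a + G a)" using LF unfolding lin_def by (simp add: sc_addr[OF kal])
    fix p assume p: "is_path Q p"
    show "Dw (wt (\<lambda>C. f C + g C)) (nu p) = F (nu p) + G (nu p)"
      unfolding F_def G_def Dwf_nu[OF p] by (simp add: wt_def sc_addl[OF kal])
  qed
  have "(\<lambda>a. - ((D1 a - F a) + (D2 a - G a))) \<in> Int0 sc e (verts Q)"
    by (rule int0_neg[OF int0_add[OF r1(2) r2(2)]])
  then have "(\<lambda>a. (F a + G a) - (D1 a + D2 a)) \<in> Int0 sc e (verts Q)"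
    by (simp add: algebra_simps)
  then show "theta Q sc e nu T x0 (\<lambda>C. f C + g C)
        = hh_add sc e (verts Q) (theta Q sc e nu T x0 f) (theta Q sc e nu T x0 g)"
    unfolding theta_eq[OF hom_add[OF f g]] hh_add_def e1 D1_def[symmetric] D2_def[symmetric]
    by (rule hh_class_eq)
  have e2: "Dw (wt (\<lambda>C. c * f C)) = (\<lambda>a. sc c (F a))"
  proof (rule det[OF Dwf_lin])
    show "lin (\<lambda>a. sc c (F a))" using LF unfolding lin_def by (simp add: sc_addr[OF kal] sc_comm[OF kal])
    fix p assume p: "is_path Q p"
    show "Dw (wt (\<lambda>C. c * f C)) (nu p) = sc c (F (nu p))"
      unfolding F_def Dwf_nu[OF p] by (simp add: wt_def sc_mult[OF kal])
  qed
  have "(\<lambda>a. - sc c (D1 a - F a)) \<in> Int0 sc e (verts Q)"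
    by (rule int0_neg[OF int0_scale[OF r1(2)]])
  then have "(\<lambda>a. sc c (F a) - sc c (D1 a)) \<in> Int0 sc e (verts Q)"
    by (simp add: sc_diffr[OF kal])
  then show "theta Q sc e nu T x0 (\<lambda>C. c * f C)
        = hh_scale sc e (verts Q) c (theta Q sc e nu T x0 f)"
    unfolding theta_eq[OF hom_scale[OF f]] hh_scale_def e2 D1_def[symmetric]
    by (rule hh_class_eq)
  have e3: "Dw (wt (\<lambda>C. 0)) = (\<lambda>a. 0)"
  proof (rule det[OF Dwf_lin])
    show "lin (\<lambda>a. 0)" unfolding lin_def by (simp add: sc_0r[OF kal])
    fix p assume p: "is_path Q p"
    show "Dw (wt (\<lambda>C. 0)) (nu p) = 0"
      unfolding Dwf_nu[OF p] by (simp add: wt_def sc_0l[OF kal])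
  qed
  have e4: "(\<lambda>a. D1 (D2 a) - D2 (D1 a)) = (\<lambda>a. 0)"
    by (rule diag_comm[OF r1(3,4) r2(3,4)])
  show "hh_bracket sc e (verts Q) (theta Q sc e nu T x0 f) (theta Q sc e nu T x0 g)
        = theta Q sc e nu T x0 (\<lambda>C. 0)"
    unfolding theta_eq[OF hom_zero] hh_bracket_def Let_def D1_def[symmetric] D2_def[symmetric] e3 e4 ..
qed

end

theorem mainTheorem4:
  fixes Q :: "('v, 'e) quiver"
    and sc :: "'k::field \<Rightarrow> 'a::ring_1 \<Rightarrow> 'a"
    and e :: "'v \<Rightarrow> 'a"
    and nu :: "('v, 'e) walk \<Rightarrow> 'a"
    and T :: "'e set"
    and x0 :: 'v
  assumes "alg_closed TYPE('k)"
    and "kalgebra sc"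
    and "finite_quiver Q"
    and "connected_quiver Q"
    and "no_oriented_cycles Q"
    and "presentation Q sc e nu"
    and "x0 \<in> verts Q"
    and "max_tree Q T"
  shows "\<forall>f \<in> hom (pi1 Q sc nu x0) kplus. \<forall>g \<in> hom (pi1 Q sc nu x0) kplus. \<forall>c::'k.
      (\<exists>D. is_ftilde Q sc e nu T x0 f D) \<and>
      theta Q sc e nu T x0 (\<lambda>C. f C + g C)
        = hh_add sc e (verts Q) (theta Q sc e nu T x0 f) (theta Q sc e nu T x0 g) \<and>
      theta Q sc e nu T x0 (\<lambda>C. c * f C)
        = hh_scale sc e (verts Q) c (theta Q sc e nu T x0 f) \<and>
      hh_bracket sc e (verts Q) (theta Q sc e nu T x0 f) (theta Q sc e nu T x0 g)
        = theta Q sc e nu T x0 (\<lambda>C. 0)"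
proof -
  interpret ctx4 Q sc e nu T x0
    by unfold_locales (use assms in auto)
  show ?thesis by (rule main)
qed

end
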